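(* Let $E$ be an $\mathbb{R}$-group, $X$ a locally compact (Hausdorff) space not reduced to one point, and suppose there exists a continuous absorptive action $\mathcal{H}=(H_\varepsilon)_{\varepsilon\in E}$ of $E$ on $X$. Then $X$ is noncompact, nondiscrete, and $\sigma$-compact.
   Context: An $\mathbb{R}$-group is an abelian group $E$ (operation written multiplicatively) whose underlying set is a subset of $\mathbb{R}$ containing all positive integers, such that: (RG1) with the natural order of $\mathbb{R}$, $E$ is a totally ordered group; (RG2) with the topology induced from $\mathbb{R}$, $E$ is a locally compact group; (RG3) there is a nonconstant continuous homomorphism $h:E\to\mathbb{R}_+^*$ such that for every $\alpha\in E$ the set $\{\varepsilon\in E:\varepsilon\ge\alpha\}$ is integrable for $h\cdot m$, $m$ a Haar measure on $E$. $e$ is the identity of $E$, $\varepsilon^{-1}$ the group inverse; inequalities refer to the order of $\mathbb{R}$. An action of $E$ on $X$ is a family $(H_\varepsilon)_{\varepsilon\in E}$ of bijections of $X$ with $H_\varepsilon\circ H_{\varepsilon'}=H_{\varepsilon\varepsilon'}$, $H_e=\mathrm{id}_X$; it is continuous if $(\varepsilon,x)\mapsto H_\varepsilon(x)$ is continuous on $E\times X$; it is absorptive if some $\omega\in X$ satisfies: for every neighbourhood $V$ of $\omega$ and every $x\in X$ there are a neighbourhood $U$ of $x$ and $\alpha\in E$ with $H_{\varepsilon^{-1}}(U)\subset V$ for all $\varepsilon\le\alpha$. *)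

theory Defs
  imports "HOL-Analysis.Analysis" "HOL-Algebra.Group"
begin

definition Egrp :: "real set \<Rightarrow> (real \<Rightarrow> real \<Rightarrow> real) \<Rightarrow> real \<Rightarrow> real monoid" where
  "Egrp E mul e = \<lparr>carrier = E, mult = mul, one = e\<rparr>"

definition haar_measure_on ::
  "real set \<Rightarrow> (real \<Rightarrow> real \<Rightarrow> real) \<Rightarrow> real measure \<Rightarrow> bool" where
  "haar_measure_on E mul m \<longleftrightarrow>
     space m = E \<and> sets m = sets (restrict_space borel E) \<and>
     (\<forall>g\<in>E. \<forall>A\<in>sets m. emeasure m ((\<lambda>x. mul g x) ` A) = emeasure m A) \<and>
     (\<forall>K. compactin (subtopology euclideanreal E) K \<longrightarrow> emeasure m K < \<infinity>) \<and>
     (\<forall>U. openin (subtopology euclideanreal E) U \<and> U \<noteq> {} \<longrightarrow> emeasure m U > 0) \<and>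
     (\<forall>A\<in>sets m. emeasure m A =
        (INF U\<in>{U. openin (subtopology euclideanreal E) U \<and> A \<subseteq> U}. emeasure m U)) \<and>
     (\<forall>U. openin (subtopology euclideanreal E) U \<longrightarrow> emeasure m U =
        (SUP K\<in>{K. compactin (subtopology euclideanreal E) K \<and> K \<subseteq> U}. emeasure m K))"

definition R_group :: "real set \<Rightarrow> (real \<Rightarrow> real \<Rightarrow> real) \<Rightarrow> real \<Rightarrow> bool" where
  "R_group E mul e \<longleftrightarrow>
     comm_group (Egrp E mul e) \<and>
     (\<forall>n::nat. n \<ge> 1 \<longrightarrow> real n \<in> E) \<and>
     \<comment> \<open>(RG1) totally ordered group for the natural order of the reals\<close>
     (\<forall>a\<in>E. \<forall>b\<in>E. \<forall>c\<in>E. a \<le> b \<longrightarrow> mul a c \<le> mul b c) \<and>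
     \<comment> \<open>(RG2) locally compact (topological) group for the induced topology\<close>
     continuous_map (prod_topology (subtopology euclideanreal E) (subtopology euclideanreal E))
        (subtopology euclideanreal E) (\<lambda>(a, b). mul a b) \<and>
     continuous_map (subtopology euclideanreal E) (subtopology euclideanreal E)
        (\<lambda>a. inv\<^bsub>Egrp E mul e\<^esub> a) \<and>
     locally_compact_space (subtopology euclideanreal E) \<and>
     \<comment> \<open>(RG3)\<close>
     (\<exists>h m. continuous_map (subtopology euclideanreal E) euclideanreal h \<and>
        (\<forall>a\<in>E. h a > 0) \<and>
        (\<forall>a\<in>E. \<forall>b\<in>E. h (mul a b) = h a * h b) \<and>
        (\<exists>a\<in>E. \<exists>b\<in>E. h a \<noteq> h b) \<and>
        haar_measure_on E mul m \<and>
        (\<forall>\<alpha>\<in>E. (\<integral>\<^sup>+ x\<in>{\<epsilon>\<in>E. \<epsilon> \<ge> \<alpha>}. ennreal (h x) \<partial>m) < \<infinity>))"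

definition group_action_on ::
  "real set \<Rightarrow> (real \<Rightarrow> real \<Rightarrow> real) \<Rightarrow> real \<Rightarrow> 'a topology \<Rightarrow> (real \<Rightarrow> 'a \<Rightarrow> 'a) \<Rightarrow> bool" where
  "group_action_on E mul e X H \<longleftrightarrow>
     (\<forall>\<epsilon>\<in>E. bij_betw (H \<epsilon>) (topspace X) (topspace X)) \<and>
     (\<forall>\<epsilon>\<in>E. \<forall>\<epsilon>'\<in>E. \<forall>x\<in>topspace X. H \<epsilon> (H \<epsilon>' x) = H (mul \<epsilon> \<epsilon>') x) \<and>
     (\<forall>x\<in>topspace X. H e x = x)"

definition continuous_action ::
  "real set \<Rightarrow> 'a topology \<Rightarrow> (real \<Rightarrow> 'a \<Rightarrow> 'a) \<Rightarrow> bool" where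
  "continuous_action E X H \<longleftrightarrow>
     continuous_map (prod_topology (subtopology euclideanreal E) X) X (\<lambda>(\<epsilon>, x). H \<epsilon> x)"

definition absorptive_action ::
  "real set \<Rightarrow> (real \<Rightarrow> real \<Rightarrow> real) \<Rightarrow> real \<Rightarrow> 'a topology \<Rightarrow> (real \<Rightarrow> 'a \<Rightarrow> 'a) \<Rightarrow> bool" where
  "absorptive_action E mul e X H \<longleftrightarrow>
     (\<exists>\<omega>\<in>topspace X. \<forall>V. V \<subseteq> topspace X \<and> (\<exists>W. openin X W \<and> \<omega> \<in> W \<and> W \<subseteq> V) \<longrightarrow>
        (\<forall>x\<in>topspace X. \<exists>U \<alpha>. U \<subseteq> topspace X \<and> (\<exists>W. openin X W \<and> x \<in> W \<and> W \<subseteq> U) \<and>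
           \<alpha> \<in> E \<and> (\<forall>\<epsilon>\<in>E. \<epsilon> \<le> \<alpha> \<longrightarrow> H (inv\<^bsub>Egrp E mul e\<^esub> \<epsilon>) ` U \<subseteq> V)))"

definition sigma_compact_space :: "'a topology \<Rightarrow> bool" where
  "sigma_compact_space X \<longleftrightarrow>
     (\<exists>K::nat \<Rightarrow> 'a set. (\<forall>n. compactin X (K n)) \<and> (\<Union>n. K n) = topspace X)"

end

theory Submission
  imports Defs
begin

lemma inv_antimono:
  assumes R: "R_group E mul e" and a: "a \<in> E" and b: "b \<in> E" and ab: "a \<le> b"
  shows "inv\<^bsub>Egrp E mul e\<^esub> b \<le> inv\<^bsub>Egrp E mul e\<^esub> a"
proof -
  let ?G = "Egrp E mul e"
  have cg: "comm_group ?G" and mono: "\<forall>a\<in>E. \<forall>b\<in>E. \<forall>c\<in>E. a \<le> b \<longrightarrow> mul a c \<le> mul b c"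
    using R unfolding R_group_def by auto
  interpret comm_group ?G by (rule cg)
  have car: "carrier ?G = E" and mu: "\<And>x y. x \<otimes>\<^bsub>?G\<^esub> y = mul x y" by (simp_all add: Egrp_def)
  have ac: "a \<in> carrier ?G" "b \<in> carrier ?G" using a b car by auto
  let ?c = "inv\<^bsub>?G\<^esub> a \<otimes>\<^bsub>?G\<^esub> inv\<^bsub>?G\<^esub> b"
  have c: "?c \<in> E" using ac car by auto
  have 1: "a \<otimes>\<^bsub>?G\<^esub> ?c = inv\<^bsub>?G\<^esub> b" using ac by (simp add: m_assoc[symmetric])
  have 2: "b \<otimes>\<^bsub>?G\<^esub> ?c = inv\<^bsub>?G\<^esub> a" using ac m_lcomm[of b "inv\<^bsub>?G\<^esub> a" "inv\<^bsub>?G\<^esub> b"] by simp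
  have "mul a ?c \<le> mul b ?c" using mono a b c ab by blast
  then show ?thesis using 1 2 by (simp add: mu)
qed

theorem corollary2p1:
  fixes E :: "real set" and mul :: "real \<Rightarrow> real \<Rightarrow> real" and e :: real
    and X :: "'a topology" and H :: "real \<Rightarrow> 'a \<Rightarrow> 'a"
  assumes "R_group E mul e"
    and "Hausdorff_space X" and "locally_compact_space X"
    and "\<exists>x\<in>topspace X. \<exists>y\<in>topspace X. x \<noteq> y"
    and "group_action_on E mul e X H"
    and "continuous_action E X H"
    and "absorptive_action E mul e X H"
  shows "\<not> compact_space X \<and> X \<noteq> discrete_topology (topspace X) \<and> sigma_compact_space X"
proof -
  let ?G = "Egrp E mul e"
  let ?i = "\<lambda>x. inv\<^bsub>?G\<^esub> x"
  have cg: "comm_group ?G" using assms(1) by (simp add: R_group_def)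
  then interpret G: comm_group ?G .
  have car: "carrier ?G = E" by (simp add: Egrp_def)
  have mu: "\<And>x y. x \<otimes>\<^bsub>?G\<^esub> y = mul x y" and one: "\<one>\<^bsub>?G\<^esub> = e" by (simp_all add: Egrp_def)
  have invE: "\<And>x. x \<in> E \<Longrightarrow> ?i x \<in> E" using car by auto
  have invinv: "\<And>x. x\<in>E \<Longrightarrow> ?i (?i x) = x" using car by auto
  have linv: "mul (?i x) x = e" if "x\<in>E" for x using car G.l_inv[of x] that by (simp add: mu one)
  have nat: "\<And>n::nat. n \<ge> 1 \<Longrightarrow> real n \<in> E" using assms(1) by (simp add: R_group_def)
  have bij: "\<And>\<epsilon>. \<epsilon>\<in>E \<Longrightarrow> bij_betw (H \<epsilon>) (topspace X) (topspace X)"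
    and comp: "\<And>\<epsilon> \<epsilon>' x. \<epsilon>\<in>E \<Longrightarrow> \<epsilon>'\<in>E \<Longrightarrow> x\<in>topspace X \<Longrightarrow> H \<epsilon> (H \<epsilon>' x) = H (mul \<epsilon> \<epsilon>') x"
    and He: "\<And>x. x\<in>topspace X \<Longrightarrow> H e x = x"
    using assms(5) by (auto simp: group_action_on_def)
  have bck: "\<And>\<epsilon> x. \<epsilon>\<in>E \<Longrightarrow> x\<in>topspace X \<Longrightarrow> H (?i \<epsilon>) (H \<epsilon> x) = x"
    using comp[OF invE _] linv He by simp
  have cont: "continuous_map X X (H \<epsilon>)" if "\<epsilon>\<in>E" for \<epsilon>
  proof -
    have "continuous_map X (prod_topology (subtopology euclideanreal E) X) (\<lambda>x. (\<epsilon>, x))"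
      using that by (simp add: continuous_map_paired)
    then have "continuous_map X X ((\<lambda>(\<epsilon>, x). H \<epsilon> x) \<circ> (\<lambda>x. (\<epsilon>, x)))"
      using assms(6) continuous_map_compose unfolding continuous_action_def by blast
    then show ?thesis by (simp add: o_def)
  qed
  obtain \<omega> where om: "\<omega> \<in> topspace X" and P: "\<forall>V. V \<subseteq> topspace X \<and> (\<exists>W. openin X W \<and> \<omega> \<in> W \<and> W \<subseteq> V) \<longrightarrow>
        (\<forall>x\<in>topspace X. \<exists>U \<alpha>. U \<subseteq> topspace X \<and> (\<exists>W. openin X W \<and> x \<in> W \<and> W \<subseteq> U) \<and>
           \<alpha> \<in> E \<and> (\<forall>\<epsilon>\<in>E. \<epsilon> \<le> \<alpha> \<longrightarrow> H (?i \<epsilon>) ` U \<subseteq> V))"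
    using assms(7) unfolding absorptive_action_def ..
  have absV: "\<exists>W \<alpha>. openin X W \<and> x \<in> W \<and> \<alpha> \<in> E \<and> (\<forall>\<epsilon>\<in>E. \<epsilon> \<le> \<alpha> \<longrightarrow> H (?i \<epsilon>) ` W \<subseteq> V)"
    if "V \<subseteq> topspace X" "openin X W0" "\<omega> \<in> W0" "W0 \<subseteq> V" "x \<in> topspace X" for V W0 x
  proof -
    have hv: "V \<subseteq> topspace X \<and> (\<exists>W. openin X W \<and> \<omega> \<in> W \<and> W \<subseteq> V)" using that by blast
    have h: "\<exists>U \<alpha>. U \<subseteq> topspace X \<and> (\<exists>W. openin X W \<and> x \<in> W \<and> W \<subseteq> U) \<and>
           \<alpha> \<in> E \<and> (\<forall>\<epsilon>\<in>E. \<epsilon> \<le> \<alpha> \<longrightarrow> H (?i \<epsilon>) ` U \<subseteq> V)"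
      using bspec[OF mp[OF spec[OF P, of V] hv] that(5)] .
    then obtain U \<alpha> W where "openin X W" "x \<in> W" "W \<subseteq> U" "\<alpha> \<in> E" "\<forall>\<epsilon>\<in>E. \<epsilon> \<le> \<alpha> \<longrightarrow> H (?i \<epsilon>) ` U \<subseteq> V"
      by (elim exE conjE)
    then show ?thesis by blast
  qed
  obtain y where y: "y \<in> topspace X" "y \<noteq> \<omega>" using assms(4) by blast
  have nc: "\<not> compact_space X"
  proof
    assume cs: "compact_space X"
    obtain V0 where V0: "openin X V0" "\<omega> \<in> V0" "y \<notin> V0"
      using assms(2) om y unfolding Hausdorff_space_def disjnt_def by blast
    have V0s: "V0 \<subseteq> topspace X" using V0 openin_subset by blast
    define \<U> where "\<U> = {W. openin X W \<and> (\<exists>\<alpha>\<in>E. \<forall>\<epsilon>\<in>E. \<epsilon>\<le>\<alpha> \<longrightarrow> H (?i \<epsilon>) ` W \<subseteq> V0)}"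
    have "topspace X \<subseteq> \<Union>\<U>"
    proof
      fix x assume "x \<in> topspace X"
      then obtain W \<alpha> where "openin X W \<and> x \<in> W \<and> \<alpha> \<in> E \<and> (\<forall>\<epsilon>\<in>E. \<epsilon> \<le> \<alpha> \<longrightarrow> H (?i \<epsilon>) ` W \<subseteq> V0)"
        using absV[OF V0s V0(1) V0(2) order_refl] by blast
      then show "x \<in> \<Union>\<U>" unfolding \<U>_def by blast
    qed
    moreover have "\<forall>W\<in>\<U>. openin X W" unfolding \<U>_def by blast
    ultimately have "\<exists>F. finite F \<and> F \<subseteq> \<U> \<and> topspace X \<subseteq> \<Union>F"
      using compact_space_alt[THEN iffD1, OF cs, rule_format, of \<U>] by blast
    then obtain F where F: "finite F" "F \<subseteq> \<U>" "topspace X \<subseteq> \<Union>F"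
      by (elim exE conjE)
    have "\<forall>W\<in>F. \<exists>\<alpha>. \<alpha>\<in>E \<and> (\<forall>\<epsilon>\<in>E. \<epsilon>\<le>\<alpha> \<longrightarrow> H (?i \<epsilon>) ` W \<subseteq> V0)" using F(2) unfolding \<U>_def by blast
    from bchoice[OF this] obtain f where f: "\<forall>W\<in>F. f W \<in> E \<and> (\<forall>\<epsilon>\<in>E. \<epsilon>\<le>f W \<longrightarrow> H (?i \<epsilon>) ` W \<subseteq> V0)"
      by blast
    have Fne: "F \<noteq> {}" using F(3) y by blast
    define a where "a = Min (f ` F)"
    have aE: "a \<in> E" proof -
      have "Min (f ` F) \<in> f ` F" using F(1) Fne by (intro Min_in) auto
      then obtain W where W: "W \<in> F" "Min (f ` F) = f W" by blast
      have "f W \<in> E" using bspec[OF f W(1)] by (rule conjunct1)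
      then show ?thesis unfolding a_def using W(2) by simp
    qed
    have ale: "\<And>W. W \<in> F \<Longrightarrow> a \<le> f W" unfolding a_def using F(1) by simp
    have "y \<in> H (?i a) ` topspace X" using bij_betw_imp_surj_on[OF bij[OF invE[OF aE]]] y by simp
    then obtain z where z: "z \<in> topspace X" "y = H (?i a) z" by blast
    then obtain W where "W \<in> F" "z \<in> W" using F(3) by blast
    then have "y \<in> V0"
    proof -
      assume W: "W \<in> F" "z \<in> W"
      have "\<forall>\<epsilon>\<in>E. \<epsilon> \<le> f W \<longrightarrow> H (?i \<epsilon>) ` W \<subseteq> V0" using bspec[OF f W(1)] by (rule conjunct2)
      then have "H (?i a) ` W \<subseteq> V0" using aE ale[OF W(1)] by blast
      then show ?thesis using W(2) z(2) by blast
    qed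
    then show False using V0 by blast
  qed
  have nd: "X \<noteq> discrete_topology (topspace X)"
  proof
    assume d: "X = discrete_topology (topspace X)"
    have o: "openin X {\<omega>}" using om by (subst d) simp
    have s: "{\<omega>} \<subseteq> topspace X" using om by simp
    obtain W1 a1 where 1: "y \<in> W1" "a1 \<in> E" "\<forall>\<epsilon>\<in>E. \<epsilon> \<le> a1 \<longrightarrow> H (?i \<epsilon>) ` W1 \<subseteq> {\<omega>}"
      using absV[OF s o _ order_refl y(1)] by blast
    obtain W2 a2 where 2: "\<omega> \<in> W2" "a2 \<in> E" "\<forall>\<epsilon>\<in>E. \<epsilon> \<le> a2 \<longrightarrow> H (?i \<epsilon>) ` W2 \<subseteq> {\<omega>}"
      using absV[OF s o _ order_refl om] by blast
    define a where "a = min a1 a2"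
    have aE: "a \<in> E" using 1 2 by (simp add: a_def min_def)
    have "H (?i a) ` W1 \<subseteq> {\<omega>}" using 1(3)[rule_format, OF aE] by (simp add: a_def)
    moreover have "H (?i a) ` W2 \<subseteq> {\<omega>}" using 2(3)[rule_format, OF aE] by (simp add: a_def)
    ultimately have "H (?i a) y = \<omega>" "H (?i a) \<omega> = \<omega>" using 1(1) 2(1) by blast+
    then have "y = \<omega>" using inj_onD[OF bij_betw_imp_inj_on[OF bij[OF invE[OF aE]]], of y \<omega>] y om
      by simp
    then show False using y by simp
  qed
  have sc: "sigma_compact_space X"
  proof -
    obtain U K where UK: "openin X U" "compactin X K" "\<omega> \<in> U" "U \<subseteq> K"
      using assms(3) om unfolding locally_compact_space_def by blast
    have Ks: "K \<subseteq> topspace X" using UK(2) compactin_subset_topspace by blast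
    have nE: "\<And>n::nat. real (Suc n) \<in> E" by (rule nat) simp
    define Kn where "Kn n = H (?i (real (Suc n))) ` K" for n
    have "compactin X (Kn n)" for n
      unfolding Kn_def using image_compactin[OF UK(2) cont[OF invE[OF nE]]] .
    moreover have "(\<Union>n. Kn n) = topspace X"
    proof
      show "(\<Union>n. Kn n) \<subseteq> topspace X"
        unfolding Kn_def using bij_betw_imp_surj_on[OF bij[OF invE[OF nE]]] Ks by blast
    next
      show "topspace X \<subseteq> (\<Union>n. Kn n)"
      proof
        fix x assume x: "x \<in> topspace X"
        obtain W \<alpha> where W: "x \<in> W" "\<alpha> \<in> E" "\<forall>\<epsilon>\<in>E. \<epsilon> \<le> \<alpha> \<longrightarrow> H (?i \<epsilon>) ` W \<subseteq> K"
          using absV[OF Ks UK(1) UK(3) UK(4) x] by blast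
        obtain n :: nat where n: "?i \<alpha> < real n" using reals_Archimedean2 by blast
        have "?i (real (Suc n)) \<le> ?i (?i \<alpha>)"
          using inv_antimono[OF assms(1) invE[OF W(2)] nE] n by simp
        then have le: "?i (real (Suc n)) \<le> \<alpha>" using invinv W(2) by simp
        have "H (?i (?i (real (Suc n)))) x \<in> K" using W invE[OF nE] le by blast
        then have hk: "H (real (Suc n)) x \<in> K" using invinv nE by simp
        have "x = H (?i (real (Suc n))) (H (real (Suc n)) x)" using bck nE x by simp
        then have "x \<in> Kn n" unfolding Kn_def using hk by blast
        then show "x \<in> (\<Union>n. Kn n)" by blast
      qed
    qed
    ultimately show ?thesis unfolding sigma_compact_space_def by blast
  qed
  show ?thesis using nc nd sc by blast
qed

end
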